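(* There exists an absolute constant $C$ such that the following holds. Let $G$ be a graph on $n$ vertices, let $0<\delta\le 1/2$, and let $s,m,b$ be positive integers with $m\le b\le \delta s$. Let $\mathcal{S}^+(s,m,b)$ be the collection of all ordered pairs $(S,F)$ where $S\in\mathcal{S}(s,m,b)$ and $F$ is a set of $m-1$ unordered pairs of vertices of $S$ such that adding the pairs in $F$ as edges to $G[S]$ yields a connected graph. Then $$|\mathcal{S}^+(s,m,b)|\le n^m\exp\big(C\delta\log(1/\delta)\,s\big).$$
   Context: $\mathcal{S}(s,m,b)$ is the collection of all sets $S\subseteq V(G)$ with $|S|=s$ such that $G[S]$ has exactly $m$ connected components $S_1,\dots,S_m$ and $\sum_{i=1}^m|N_G(S_i)|=b$, where $N_G(A)$ is the set of vertices in $V(G)\setminus A$ having a neighbor in $A$ and $G[S]$ is the induced subgraph. *)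

theory Defs
  imports Complex_Main
begin

definition simple_graph :: "nat set \<Rightarrow> (nat \<Rightarrow> nat \<Rightarrow> bool) \<Rightarrow> bool" where
  "simple_graph V E \<longleftrightarrow> finite V \<and> (\<forall>u v. E u v \<longrightarrow> u \<in> V \<and> v \<in> V)
     \<and> (\<forall>u v. E u v \<longrightarrow> E v u) \<and> (\<forall>u. \<not> E u u)"

definition nbhd :: "nat set \<Rightarrow> (nat \<Rightarrow> nat \<Rightarrow> bool) \<Rightarrow> nat set \<Rightarrow> nat set" where
  "nbhd V E A = {v \<in> V - A. \<exists>u\<in>A. E u v}"

definition reach_in :: "(nat \<Rightarrow> nat \<Rightarrow> bool) \<Rightarrow> nat set \<Rightarrow> nat \<Rightarrow> nat \<Rightarrow> bool" where
  "reach_in E S = (\<lambda>u v. u \<in> S \<and> v \<in> S \<and> E u v)\<^sup>*\<^sup>*"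

definition components_in :: "(nat \<Rightarrow> nat \<Rightarrow> bool) \<Rightarrow> nat set \<Rightarrow> nat set set" where
  "components_in E S = (\<lambda>u. {v \<in> S. reach_in E S u v}) ` S"

definition Sfam :: "nat set \<Rightarrow> (nat \<Rightarrow> nat \<Rightarrow> bool) \<Rightarrow> nat \<Rightarrow> nat \<Rightarrow> nat \<Rightarrow> nat set set" where
  "Sfam V E s m b = {S. S \<subseteq> V \<and> card S = s \<and> card (components_in E S) = m
       \<and> (\<Sum>C\<in>components_in E S. card (nbhd V E C)) = b}"

definition pairs_of :: "nat set \<Rightarrow> nat set set" where
  "pairs_of S = {{u, v} | u v. u \<in> S \<and> v \<in> S \<and> u \<noteq> v}"

definition connected_with :: "(nat \<Rightarrow> nat \<Rightarrow> bool) \<Rightarrow> nat set \<Rightarrow> nat set set \<Rightarrow> bool" where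
  "connected_with E S F \<longleftrightarrow> S \<noteq> {} \<and>
     (\<forall>u\<in>S. \<forall>v\<in>S. reach_in (\<lambda>x y. E x y \<or> {x, y} \<in> F) S u v)"

definition Splus :: "nat set \<Rightarrow> (nat \<Rightarrow> nat \<Rightarrow> bool) \<Rightarrow> nat \<Rightarrow> nat \<Rightarrow> nat \<Rightarrow> (nat set \<times> nat set set) set" where
  "Splus V E s m b = {(S, F). S \<in> Sfam V E s m b \<and> F \<subseteq> pairs_of S \<and> card F = m - 1
       \<and> connected_with E S F}"

end

theory Submission
  imports Defs
begin

definition key :: "(nat \<Rightarrow> nat \<Rightarrow> bool) \<Rightarrow> nat set \<Rightarrow> nat set" where
  "key E S = Min ` components_in E S"

definition bd :: "nat set \<Rightarrow> (nat \<Rightarrow> nat \<Rightarrow> bool) \<Rightarrow> nat set \<Rightarrow> nat set" where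
  "bd V E S = (\<Union>C\<in>components_in E S. nbhd V E C)"

lemma reach_sym:
  assumes "simple_graph V E" "reach_in E S u v"
  shows "reach_in E S v u"
proof -
  have "symp (\<lambda>u v. u \<in> S \<and> v \<in> S \<and> E u v)"
    using assms(1) unfolding simple_graph_def symp_def by blast
  hence "symp (reach_in E S)" unfolding reach_in_def by (rule symp_rtranclp)
  thus ?thesis using assms(2) by (meson sympD)
qed

lemma reach_trans:
  "reach_in E S u v \<Longrightarrow> reach_in E S v w \<Longrightarrow> reach_in E S u w"
  unfolding reach_in_def by auto

lemma comp_eq:
  assumes "simple_graph V E" "C \<in> components_in E S" "x \<in> C"
  shows "C = {v\<in>S. reach_in E S x v}"
proof -
  obtain u where u: "u \<in> S" "C = {v\<in>S. reach_in E S u v}"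
    using assms(2) unfolding components_in_def by auto
  have ux: "reach_in E S u x" using u assms(3) by auto
  have xu: "reach_in E S x u" using reach_sym[OF assms(1) ux] .
  show ?thesis using u ux xu reach_trans by blast
qed

lemma comp_sub: "C \<in> components_in E S \<Longrightarrow> C \<subseteq> S"
  unfolding components_in_def by auto

lemma comp_ne: "C \<in> components_in E S \<Longrightarrow> C \<noteq> {}"
  unfolding components_in_def reach_in_def by auto

lemma comp_of: "x \<in> S \<Longrightarrow> {v\<in>S. reach_in E S x v} \<in> components_in E S \<and> x \<in> {v\<in>S. reach_in E S x v}"
  unfolding components_in_def reach_in_def by auto

lemma comp_Min:
  assumes "finite S" "C \<in> components_in E S"
  shows "Min C \<in> C"
proof -
  have "finite C" using comp_sub[OF assms(2)] assms(1) finite_subset by blast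
  thus ?thesis using comp_ne[OF assms(2)] by simp
qed

lemma comps_finite: "finite S \<Longrightarrow> finite (components_in E S)"
  unfolding components_in_def by simp

lemma card_key:
  assumes "simple_graph V E" "finite S"
  shows "card (key E S) = card (components_in E S)"
  unfolding key_def
proof (rule card_image, rule inj_onI)
  fix C D assume C: "C \<in> components_in E S" and D: "D \<in> components_in E S" and eq: "Min C = Min D"
  have "C = {v\<in>S. reach_in E S (Min C) v}" using comp_eq[OF assms(1) C comp_Min[OF assms(2) C]] .
  moreover have "D = {v\<in>S. reach_in E S (Min D) v}" using comp_eq[OF assms(1) D comp_Min[OF assms(2) D]] .
  ultimately show "C = D" using eq by simp
qed

lemma key_sub: "finite S \<Longrightarrow> key E S \<subseteq> S"
  unfolding key_def using comp_Min comp_sub by blast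

lemma bd_sub: "bd V E S \<subseteq> V"
  unfolding bd_def nbhd_def by auto

lemma bd_disj:
  assumes "simple_graph V E"
  shows "S \<inter> bd V E S = {}"
proof (rule ccontr)
  assume "S \<inter> bd V E S \<noteq> {}"
  then obtain z C where z: "z \<in> S" "C \<in> components_in E S" "z \<in> nbhd V E C"
    unfolding bd_def by auto
  then obtain u where u: "u \<in> C" "E u z" "z \<notin> C" unfolding nbhd_def by auto
  have uS: "u \<in> S" using u(1) comp_sub[OF z(2)] by auto
  have "reach_in E S u z" unfolding reach_in_def using uS z(1) u(2) by auto
  hence "z \<in> C" using comp_eq[OF assms z(2) u(1)] z(1) by auto
  thus False using u(3) by simp
qed

lemma reach_mono: "S \<subseteq> R \<Longrightarrow> reach_in E S u v \<Longrightarrow> reach_in E R u v"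
  unfolding reach_in_def
  by (erule rtranclp_mono[THEN predicate2D, rotated]) auto

lemma char:
  assumes "simple_graph V E" "finite S" "S \<subseteq> R" "R \<inter> bd V E S = {}"
  shows "S = {x. \<exists>w\<in>key E S. reach_in E R w x}"
proof
  show "S \<subseteq> {x. \<exists>w\<in>key E S. reach_in E R w x}"
  proof
    fix x assume x: "x \<in> S"
    define C where "C = {v\<in>S. reach_in E S x v}"
    have C: "C \<in> components_in E S" "x \<in> C" using comp_of[OF x] C_def by auto
    have "C = {v\<in>S. reach_in E S (Min C) v}" using comp_eq[OF assms(1) C(1) comp_Min[OF assms(2) C(1)]] .
    hence "reach_in E S (Min C) x" using C(2) by auto
    hence "reach_in E R (Min C) x" using reach_mono[OF assms(3)] by blast
    moreover have "Min C \<in> key E S" unfolding key_def using C(1) by auto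
    ultimately show "x \<in> {x. \<exists>w\<in>key E S. reach_in E R w x}" by blast
  qed
next
  show "{x. \<exists>w\<in>key E S. reach_in E R w x} \<subseteq> S"
  proof
    fix x assume "x \<in> {x. \<exists>w\<in>key E S. reach_in E R w x}"
    then obtain C where C: "C \<in> components_in E S" and r: "reach_in E R (Min C) x"
      unfolding key_def by auto
    have "reach_in E R (Min C) x \<Longrightarrow> x \<in> C"
      unfolding reach_in_def
    proof (induction rule: rtranclp_induct)
      case base thus ?case using comp_Min[OF assms(2) C] .
    next
      case (step y z)
      show ?case
      proof (rule ccontr)
        assume "z \<notin> C"
        moreover have "z \<in> V" using step(2) assms(1) unfolding simple_graph_def by blast
        ultimately have "z \<in> nbhd V E C" unfolding nbhd_def using step by auto
        hence "z \<in> bd V E S" unfolding bd_def using C by auto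
        thus False using step(2) assms(4) by auto
      qed
    qed
    thus "x \<in> S" using r comp_sub[OF C] by auto
  qed
qed

lemma pow_sum:
  fixes p q :: real
  assumes "finite X"
  shows "(\<Sum>R\<in>Pow X. p ^ card R * q ^ card (X - R)) = (p + q) ^ card X"
  using assms
proof (induction X rule: finite_induct)
  case empty thus ?case by simp
next
  case (insert a X)
  have fin: "finite (Pow X)" "finite (insert a ` Pow X)" using insert by auto
  have disj: "Pow X \<inter> insert a ` Pow X = {}" using insert by auto
  have s1: "(\<Sum>R\<in>Pow X. p ^ card R * q ^ card (insert a X - R)) = q * (p+q)^card X"
  proof -
    have "(\<Sum>R\<in>Pow X. p ^ card R * q ^ card (insert a X - R)) = (\<Sum>R\<in>Pow X. q * (p ^ card R * q ^ card (X - R)))"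
    proof (rule sum.cong)
      fix R assume R: "R \<in> Pow X"
      have "insert a X - R = insert a (X - R)" using R insert by auto
      hence "card (insert a X - R) = Suc (card (X - R))" using insert R by auto
      thus "p ^ card R * q ^ card (insert a X - R) = q * (p ^ card R * q ^ card (X - R))" by simp
    qed simp
    also have "\<dots> = q * (p+q)^card X" using insert.IH by (simp add: sum_distrib_left[symmetric])
    finally show ?thesis .
  qed
  have s2: "(\<Sum>R\<in>insert a ` Pow X. p ^ card R * q ^ card (insert a X - R)) = p * (p+q)^card X"
  proof -
    have inj: "inj_on (insert a) (Pow X)" using insert by (auto simp: inj_on_def)
    have "(\<Sum>R\<in>insert a ` Pow X. p ^ card R * q ^ card (insert a X - R)) = (\<Sum>R\<in>Pow X. p ^ card (insert a R) * q ^ card (insert a X - insert a R))"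
      by (rule sum.reindex[OF inj, unfolded comp_def])
    also have "\<dots> = (\<Sum>R\<in>Pow X. p * (p ^ card R * q ^ card (X - R)))"
    proof (rule sum.cong)
      fix R assume R: "R \<in> Pow X"
      have e1: "insert a X - insert a R = X - R" using R insert by auto
      have "finite R" using R insert(1) finite_subset by blast
      moreover have "a \<notin> R" using R insert(2) by auto
      ultimately have "card (insert a R) = Suc (card R)" by simp
      with e1 show "p ^ card (insert a R) * q ^ card (insert a X - insert a R) = p * (p ^ card R * q ^ card (X - R))" by simp
    qed simp
    also have "\<dots> = p * (p+q)^card X" using insert.IH by (simp add: sum_distrib_left[symmetric])
    finally show ?thesis .
  qed
  have "Pow (insert a X) = Pow X \<union> insert a ` Pow X" by (rule Pow_insert)
  hence "(\<Sum>R\<in>Pow (insert a X). p ^ card R * q ^ card (insert a X - R))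
     = (\<Sum>R\<in>Pow X. p ^ card R * q ^ card (insert a X - R)) + (\<Sum>R\<in>insert a ` Pow X. p ^ card R * q ^ card (insert a X - R))"
    using sum.union_disjoint[OF fin disj] by simp
  also have "\<dots> = (p+q)^card (insert a X)" using s1 s2 insert by (simp add: algebra_simps)
  finally show ?case .
qed

lemma cyl_sum:
  fixes p q :: real
  assumes "finite V" "S \<subseteq> V" "B \<subseteq> V" "S \<inter> B = {}"
  shows "(\<Sum>R\<in>{R. R \<subseteq> V \<and> S \<subseteq> R \<and> R \<inter> B = {}}. p ^ card R * q ^ card (V - R))
     = p ^ card S * q ^ card B * (p+q) ^ card (V - S - B)"
proof -
  let ?X = "V - S - B"
  have inj: "inj_on (\<lambda>R'. S \<union> R') (Pow ?X)" by (auto simp: inj_on_def)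
  have im: "{R. R \<subseteq> V \<and> S \<subseteq> R \<and> R \<inter> B = {}} = (\<lambda>R'. S \<union> R') ` Pow ?X"
  proof (rule set_eqI, rule iffI)
    fix R assume "R \<in> {R. R \<subseteq> V \<and> S \<subseteq> R \<and> R \<inter> B = {}}"
    hence "R = S \<union> (R - S)" "R - S \<in> Pow ?X" by auto
    thus "R \<in> (\<lambda>R'. S \<union> R') ` Pow ?X" by blast
  qed (use assms in auto)
  have fS: "finite S" "finite B" using assms finite_subset by metis+
  have "(\<Sum>R\<in>{R. R \<subseteq> V \<and> S \<subseteq> R \<and> R \<inter> B = {}}. p ^ card R * q ^ card (V - R))
      = (\<Sum>R'\<in>Pow ?X. p ^ card (S \<union> R') * q ^ card (V - (S \<union> R')))"
    unfolding im by (rule sum.reindex[OF inj, unfolded comp_def])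
  also have "\<dots> = (\<Sum>R'\<in>Pow ?X. (p ^ card S * q ^ card B) * (p ^ card R' * q ^ card (?X - R')))"
  proof (rule sum.cong)
    fix R' assume R': "R' \<in> Pow ?X"
    have fR: "finite R'" "finite (?X - R')" using R' assms(1) by (auto intro: finite_subset)
    have "card (S \<union> R') = card S + card R'" using R' fS fR by (subst card_Un_disjoint) auto
    moreover have "V - (S \<union> R') = B \<union> (?X - R')" using R' assms by auto
    moreover have "card (B \<union> (?X - R')) = card B + card (?X - R')" using fS fR by (subst card_Un_disjoint) auto
    ultimately show "p ^ card (S \<union> R') * q ^ card (V - (S \<union> R')) = (p ^ card S * q ^ card B) * (p ^ card R' * q ^ card (?X - R'))"
      by (simp add: power_add algebra_simps)
  qed simp
  also have "\<dots> = p ^ card S * q ^ card B * (p+q) ^ card ?X"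
    using pow_sum[of ?X p q] assms(1) by (simp add: sum_distrib_left[symmetric])
  finally show ?thesis .
qed

lemma kraft:
  fixes p q :: real and A B :: "'a \<Rightarrow> nat set"
  assumes "finite V" "0 \<le> p" "0 \<le> q" "p + q = 1" "finite F"
    and sub: "\<And>x. x \<in> F \<Longrightarrow> A x \<subseteq> V \<and> B x \<subseteq> V \<and> A x \<inter> B x = {}"
    and dis: "\<And>x y R. x \<in> F \<Longrightarrow> y \<in> F \<Longrightarrow> A x \<subseteq> R \<Longrightarrow> R \<inter> B x = {} \<Longrightarrow> A y \<subseteq> R \<Longrightarrow> R \<inter> B y = {} \<Longrightarrow> x = y"
  shows "(\<Sum>x\<in>F. p ^ card (A x) * q ^ card (B x)) \<le> 1"
proof -
  define cyl where "cyl x = {R. R \<subseteq> V \<and> A x \<subseteq> R \<and> R \<inter> B x = {}}" for x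
  define w where "w R = p ^ card R * q ^ card (V - R)" for R
  have "(\<Sum>x\<in>F. p ^ card (A x) * q ^ card (B x)) = (\<Sum>x\<in>F. sum w (cyl x))"
  proof (rule sum.cong)
    fix x assume x: "x \<in> F"
    show "p ^ card (A x) * q ^ card (B x) = sum w (cyl x)"
      unfolding w_def cyl_def using cyl_sum[of V "A x" "B x" p q] sub[OF x] assms(1,4) by simp
  qed simp
  also have "\<dots> = sum w (\<Union>(cyl ` F))"
    by (rule sum.UNION_disjoint[symmetric]) (use assms(1,5) dis in \<open>auto simp: cyl_def\<close>)
  also have "\<dots> \<le> sum w (Pow V)"
    by (rule sum_mono2) (use assms(1-3) in \<open>auto simp: cyl_def w_def\<close>)
  also have "\<dots> = 1" unfolding w_def using pow_sum[OF assms(1), of p q] assms(4) by simp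
  finally show ?thesis .
qed

lemma sfam_bound:
  fixes p q :: real
  assumes G: "simple_graph V E" and "0 < p" "0 < q" "p + q = 1"
  shows "real (card (Sfam V E s m b)) * (p ^ s * q ^ b) \<le> real (card V choose m)"
proof -
  have finV: "finite V" using G unfolding simple_graph_def by blast
  define K where "K = {W. W \<subseteq> V \<and> card W = m}"
  define Gr where "Gr W = {S\<in>Sfam V E s m b. key E S = W}" for W
  have finK: "finite K" unfolding K_def using finV by auto
  have cover: "Sfam V E s m b = \<Union>(Gr ` K)"
  proof (rule set_eqI, rule iffI)
    fix S assume S: "S \<in> Sfam V E s m b"
    hence SV: "S \<subseteq> V" and c: "card (components_in E S) = m" unfolding Sfam_def by auto
    have fS: "finite S" using SV finV finite_subset by blast
    have "key E S \<in> K" unfolding K_def using key_sub[OF fS] SV card_key[OF G fS] c by auto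
    thus "S \<in> \<Union>(Gr ` K)" unfolding Gr_def using S by auto
  qed (auto simp: Gr_def)
  have each: "real (card (Gr W)) * (p ^ s * q ^ b) \<le> 1" for W
  proof -
    have finGr: "finite (Gr W)"
      by (rule finite_subset[of _ "Pow V"]) (auto simp: Gr_def Sfam_def finV)
    have "real (card (Gr W)) * (p ^ s * q ^ b) \<le> (\<Sum>S\<in>Gr W. p ^ card S * q ^ card (bd V E S))"
    proof (rule sum_bounded_below)
      fix S assume S: "S \<in> Gr W"
      hence SV: "S \<subseteq> V" and cs: "card S = s"
        and bs: "(\<Sum>C\<in>components_in E S. card (nbhd V E C)) = b"
        unfolding Gr_def Sfam_def by auto
      have fS: "finite S" using SV finV finite_subset by blast
      have "card (bd V E S) \<le> b" unfolding bd_def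
        using card_UN_le[OF comps_finite[OF fS, of E], of "nbhd V E"] bs by simp
      hence "q ^ b \<le> q ^ card (bd V E S)"
        using assms by (intro power_decreasing) auto
      thus "p ^ s * q ^ b \<le> p ^ card S * q ^ card (bd V E S)"
        using cs assms by (simp add: mult_left_mono)
    qed
    also have "\<dots> \<le> 1"
    proof (rule kraft[where A = "\<lambda>S. S" and B = "bd V E"])
      show "finite V" by (rule finV)
      show "finite (Gr W)" by (rule finGr)
      show "0 \<le> p" "0 \<le> q" "p + q = 1" using assms by auto
      show "S \<subseteq> V \<and> bd V E S \<subseteq> V \<and> S \<inter> bd V E S = {}" if "S \<in> Gr W" for S
        using that bd_sub bd_disj[OF G] unfolding Gr_def Sfam_def by auto
      show "S = S'" if "S \<in> Gr W" "S' \<in> Gr W" "S \<subseteq> R" "R \<inter> bd V E S = {}"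
        "S' \<subseteq> R" "R \<inter> bd V E S' = {}" for S S' R
      proof -
        have fS: "finite S" "finite S'" using that(1,2) finV finite_subset unfolding Gr_def Sfam_def
          by blast+
        have "S = {x. \<exists>w\<in>key E S. reach_in E R w x}" using char[OF G fS(1) that(3,4)] .
        moreover have "S' = {x. \<exists>w\<in>key E S'. reach_in E R w x}" using char[OF G fS(2) that(5,6)] .
        moreover have "key E S = key E S'" using that(1,2) unfolding Gr_def by auto
        ultimately show ?thesis by simp
      qed
    qed
    finally show ?thesis .
  qed
  have "real (card (Sfam V E s m b)) \<le> (\<Sum>W\<in>K. real (card (Gr W)))"
    unfolding cover using card_UN_le[OF finK, of Gr] by (simp flip: of_nat_sum)
  hence "real (card (Sfam V E s m b)) * (p ^ s * q ^ b) \<le> (\<Sum>W\<in>K. real (card (Gr W)) * (p ^ s * q ^ b))"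
    using assms by (simp add: sum_distrib_right[symmetric] mult_right_mono)
  also have "\<dots> \<le> (\<Sum>W\<in>K. 1)" by (rule sum_mono) (rule each)
  also have "\<dots> = real (card V choose m)" unfolding K_def using n_subsets[OF finV] by simp
  finally show ?thesis .
qed

lemma pairs_card:
  assumes "finite S"
  shows "finite (pairs_of S) \<and> card (pairs_of S) \<le> card S ^ 2"
proof -
  have sub: "pairs_of S \<subseteq> (\<lambda>(u,v). {u,v}) ` (S \<times> S)" unfolding pairs_of_def by auto
  have fin: "finite ((\<lambda>(u,v). {u,v}) ` (S \<times> S))" using assms by auto
  have "card (pairs_of S) \<le> card ((\<lambda>(u,v). {u,v}) ` (S \<times> S))" by (rule card_mono[OF fin sub])
  also have "\<dots> \<le> card (S \<times> S)" using assms by (intro card_image_le) auto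
  also have "\<dots> = card S ^ 2" by (simp add: card_cartesian_product power2_eq_square)
  finally show ?thesis using finite_subset[OF sub fin] by simp
qed

lemma splus_bound:
  assumes "finite V"
  shows "card (Splus V E s m b) \<le> card (Sfam V E s m b) * (s ^ 2 choose (m - 1))"
proof -
  define Fs where "Fs S = {F. F \<subseteq> pairs_of S \<and> card F = m - 1}" for S
  have finSf: "finite (Sfam V E s m b)"
    by (rule finite_subset[of _ "Pow V"]) (auto simp: Sfam_def assms)
  have finS: "finite S" if "S \<in> Sfam V E s m b" for S
    using that assms finite_subset unfolding Sfam_def by blast
  have finFs: "finite (Fs S)" if "S \<in> Sfam V E s m b" for S
    unfolding Fs_def using pairs_card[OF finS[OF that]] by auto
  have sub: "Splus V E s m b \<subseteq> Sigma (Sfam V E s m b) Fs" unfolding Splus_def Fs_def by auto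
  have "card (Splus V E s m b) \<le> card (Sigma (Sfam V E s m b) Fs)"
    by (rule card_mono[OF _ sub]) (use finSf finFs in auto)
  also have "\<dots> = (\<Sum>S\<in>Sfam V E s m b. card (Fs S))" using finSf finFs by (intro card_SigmaI) auto
  also have "\<dots> \<le> (\<Sum>S\<in>Sfam V E s m b. s ^ 2 choose (m - 1))"
  proof (rule sum_mono)
    fix S assume S: "S \<in> Sfam V E s m b"
    have pc: "finite (pairs_of S)" "card (pairs_of S) \<le> s ^ 2"
      using pairs_card[OF finS[OF S]] S unfolding Sfam_def by auto
    have "card (Fs S) = card (pairs_of S) choose (m - 1)" unfolding Fs_def using n_subsets[OF pc(1)] by simp
    also have "\<dots> \<le> s ^ 2 choose (m - 1)" by (rule binomial_right_mono[OF pc(2)])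
    finally show "card (Fs S) \<le> s ^ 2 choose (m - 1)" .
  qed
  also have "\<dots> = card (Sfam V E s m b) * (s ^ 2 choose (m - 1))" by simp
  finally show ?thesis .
qed

lemma exp_term:
  fixes x :: real
  assumes "0 \<le> x"
  shows "x ^ k / fact k \<le> exp x"
proof -
  obtain t where t: "exp x = (\<Sum>j<Suc k. x ^ j / fact j) + exp t / fact (Suc k) * x ^ (Suc k)"
    using Maclaurin_exp_le[of x "Suc k"] by blast
  have "x ^ k / fact k \<le> (\<Sum>j<Suc k. x ^ j / fact j)"
    by (rule member_le_sum) (use assms in auto)
  moreover have "0 \<le> exp t / fact (Suc k) * x ^ (Suc k)" using assms by simp
  ultimately show ?thesis using t by linarith
qed

lemma s_term:
  fixes d :: real
  assumes "0 < d"
  shows "real s ^ k / fact k \<le> exp (d * s) / d ^ k"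
proof -
  have "(d * s) ^ k / fact k \<le> exp (d * s)" using assms by (intro exp_term) simp
  hence "d ^ k * (real s ^ k / fact k) \<le> exp (d * s)" by (simp add: power_mult_distrib)
  thus ?thesis using assms by (simp add: field_simps)
qed

lemma binom_le: "real (n choose k) \<le> real n ^ k / fact k"
proof -
  have "real ((n choose k) * fact k) \<le> real (n ^ k)" using binomial_fact_pow by (simp only: of_nat_le_iff)
  hence "real (n choose k) * fact k \<le> real n ^ k" by simp
  thus ?thesis by (simp add: field_simps)
qed

theorem mainTheorem12:
  "\<exists>C::real. \<forall>(V::nat set) E n (\<delta>::real) (s::nat) (m::nat) (b::nat).
     simple_graph V E \<and> card V = n \<and> 0 < \<delta> \<and> \<delta> \<le> 1/2 \<and>
     0 < s \<and> 0 < m \<and> 0 < b \<and> m \<le> b \<and> real b \<le> \<delta> * real s \<longrightarrow>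
     real (card (Splus V E s m b)) \<le> real n ^ m * exp (C * \<delta> * ln (1 / \<delta>) * real s)"
proof (intro exI[of _ 11] allI impI, elim conjE)
  fix V E n s m b and d :: real
  assume G: "simple_graph V E" and n: "card V = n" and d0: "0 < d" and d1: "d \<le> 1/2"
    and s0: "0 < s" and m0: "0 < m" and b0: "0 < b" and mb: "m \<le> b" and bs: "real b \<le> d * real s"
  have finV: "finite V" using G unfolding simple_graph_def by blast
  define L where "L = ln (1 / d)"
  have Ld: "L = - ln d" unfolding L_def using d0 by (simp add: ln_div)
  have L12: "1/2 \<le> L"
  proof -
    have "ln (1 - (1 - d)) \<le> - (1 - d)" using d0 d1 by (intro ln_one_minus_pos_upper_bound) auto
    thus ?thesis using Ld d1 by simp
  qed
  define P where "P = real (card (Splus V E s m b))"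
  define N where "N = real (card (Sfam V E s m b))"
  define w where "w = (1 - d) ^ s * d ^ b"
  have wpos: "0 < w" unfolding w_def using d0 d1 by simp
  have hN: "N * w \<le> real (n choose m)"
    unfolding N_def w_def using sfam_bound[OF G, of "1 - d" d s m b] d0 d1 n by simp
  have hP: "P \<le> N * real (s ^ 2 choose (m - 1))"
    unfolding P_def N_def using splus_bound[OF finV, of E s m b] by (simp flip: of_nat_mult)
  define T where "T = real s ^ (m - 1) / fact (m - 1)"
  have T0: "0 \<le> T" unfolding T_def by simp
  have hT: "T \<le> exp (d * s) / d ^ (m - 1)" unfolding T_def using s_term[OF d0] .
  have hn: "real (n choose m) \<le> real n ^ m / fact (m - 1)"
  proof -
    have "real (n choose m) \<le> real n ^ m / fact m" by (rule binom_le)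
    also have "\<dots> \<le> real n ^ m / fact (m - 1)"
      by (rule divide_left_mono) (auto intro: fact_mono)
    finally show ?thesis .
  qed
  have hs: "real (s ^ 2 choose (m - 1)) \<le> real s ^ (m - 1) * T"
  proof -
    have "real (s ^ 2 choose (m - 1)) \<le> real (s ^ 2) ^ (m - 1) / fact (m - 1)" by (rule binom_le)
    also have "\<dots> = real s ^ (m - 1) * T" unfolding T_def
      by (simp add: power2_eq_square power_mult_distrib)
    finally show ?thesis .
  qed
  have "P * w \<le> N * w * real (s ^ 2 choose (m - 1))"
    using hP wpos by (simp add: mult_right_mono algebra_simps)
  also have "\<dots> \<le> real (n choose m) * real (s ^ 2 choose (m - 1))"
    by (rule mult_right_mono[OF hN]) simp
  also have "\<dots> \<le> (real n ^ m / fact (m - 1)) * (real s ^ (m - 1) * T)"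
    by (rule mult_mono[OF hn hs]) (auto simp: T0)
  also have "\<dots> = real n ^ m * (T * T)" unfolding T_def by simp
  also have "\<dots> \<le> real n ^ m * ((exp (d * s) / d ^ (m - 1)) * (exp (d * s) / d ^ (m - 1)))"
    by (intro mult_left_mono mult_mono hT T0) (auto simp: d0 less_imp_le)
  also have "(exp (d * s) / d ^ (m - 1)) * (exp (d * s) / d ^ (m - 1)) = exp (2 * d * s) / d ^ (2 * (m - 1))"
  proof -
    have e: "2 * d * s = d * s + d * s" by simp
    have "exp (2 * d * s) = exp (d * s) * exp (d * s)" by (simp only: e exp_add)
    moreover have "d ^ (2 * (m - 1)) = d ^ (m - 1) * d ^ (m - 1)" by (simp only: mult_2 power_add)
    ultimately show ?thesis by simp
  qed
  finally have h1: "P * w \<le> real n ^ m * (exp (2 * d * s) / d ^ (2 * (m - 1)))" .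
  have e1: "exp (- 2 * d) \<le> 1 - d"
  proof -
    have "- d - 2 * d\<^sup>2 \<le> ln (1 - d)" using d0 d1 by (intro ln_one_minus_pos_lower_bound) auto
    moreover have "2 * d\<^sup>2 \<le> d" using mult_right_mono[of "2*d" 1 d] d0 d1 by (simp add: power2_eq_square algebra_simps)
    ultimately have "- 2 * d \<le> ln (1 - d)" by linarith
    hence "exp (- 2 * d) \<le> exp (ln (1 - d))" by simp
    thus ?thesis using d1 by simp
  qed
  have e2: "exp (- 2 * d * s) \<le> (1 - d) ^ s"
  proof -
    have eq: "- 2 * d * s = real s * (- 2 * d)" by simp
    have "exp (- 2 * d * s) = exp (- 2 * d) ^ s" by (simp only: eq exp_of_nat_mult)
    also have "\<dots> \<le> (1 - d) ^ s" by (rule power_mono[OF e1]) simp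
    finally show ?thesis .
  qed
  have e3: "exp (- 3 * d * s * L) \<le> d ^ (b + 2 * (m - 1))"
  proof -
    have "d ^ (3 * b) \<le> d ^ (b + 2 * (m - 1))" using d0 d1 mb by (intro power_decreasing) auto
    moreover have "d ^ (3 * b) = exp (- 3 * b * L)"
    proof -
      have "d = exp (- L)" using d0 Ld by simp
      hence "d ^ (3 * b) = exp (- L) ^ (3 * b)" by simp
      also have "\<dots> = exp (real (3 * b) * (- L))" by (rule exp_of_nat_mult[symmetric])
      also have "real (3 * b) * (- L) = - 3 * b * L" by simp
      finally show ?thesis .
    qed
    moreover have "exp (- 3 * d * s * L) \<le> exp (- 3 * b * L)"
      using bs L12 by (simp add: mult_right_mono)
    ultimately show ?thesis by linarith
  qed
  have "exp (- 2 * d * s) * exp (- 3 * d * s * L) \<le> (1 - d) ^ s * d ^ (b + 2 * (m - 1))"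
    by (rule mult_mono[OF e2 e3]) (use d1 in auto)
  hence wl: "exp (- 2 * d * s - 3 * d * s * L) \<le> w * d ^ (2 * (m - 1))"
  proof -
    have "exp (- 2 * d * s - 3 * d * s * L) = exp (- 2 * d * s) * exp (- 3 * d * s * L)"
      by (simp add: exp_add[symmetric])
    moreover have "w * d ^ (2 * (m - 1)) = (1 - d) ^ s * d ^ (b + 2 * (m - 1))"
      unfolding w_def by (simp add: power_add mult.assoc)
    ultimately show ?thesis using \<open>exp (- 2 * d * s) * exp (- 3 * d * s * L) \<le> _\<close> by simp
  qed
  have dpos: "0 < d ^ (2 * (m - 1))" using d0 by simp
  have "P * (w * d ^ (2 * (m - 1))) \<le> real n ^ m * exp (2 * d * s)"
    using h1 dpos by (simp add: field_simps)
  moreover have "P * exp (- 2 * d * s - 3 * d * s * L) \<le> P * (w * d ^ (2 * (m - 1)))"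
    by (rule mult_left_mono[OF wl]) (simp add: P_def)
  ultimately have "P * exp (- 2 * d * s - 3 * d * s * L) \<le> real n ^ m * exp (2 * d * s)" by linarith
  hence "P \<le> real n ^ m * exp (2 * d * s) / exp (- 2 * d * s - 3 * d * s * L)"
    by (simp add: pos_le_divide_eq)
  also have "\<dots> = real n ^ m * exp (4 * d * s + 3 * d * s * L)"
  proof -
    have "exp (2 * d * s) / exp (- 2 * d * s - 3 * d * s * L) = exp (2 * d * s - (- 2 * d * s - 3 * d * s * L))"
      by (rule exp_diff[symmetric])
    also have "2 * d * s - (- 2 * d * s - 3 * d * s * L) = 4 * d * s + 3 * d * s * L" by simp
    finally show ?thesis by (simp add: times_divide_eq_right[symmetric])
  qed
  also have "\<dots> \<le> real n ^ m * exp (11 * d * L * s)"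
  proof -
    have "4 * d * s * 1 \<le> 4 * d * s * (2 * L)" using L12 d0 by (intro mult_left_mono) auto
    hence "4 * d * s + 3 * d * s * L \<le> 11 * d * L * s" by (simp add: algebra_simps)
    thus ?thesis by (intro mult_left_mono) auto
  qed
  finally show "real (card (Splus V E s m b)) \<le> real n ^ m * exp (11 * d * ln (1 / d) * real s)"
    unfolding P_def L_def .
qed

end
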